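(* Let $1\le s\le n$. Let $\mathcal{N}(n,s)$ be the set of two-colour necklaces of length $n$ with exactly $s$ beads of colour $0$ and $n-s$ beads of colour $1$, and let $\mathcal{E}(n,s)$ be the set of canonical representative increment arrays of size $s$ for $n$ agents. The map sending a necklace to $\Phi(a)$, where $a=a_1\cdots a_n$ is its lexicographically smallest representative string, is a bijection $\mathcal{N}(n,s)\to\mathcal{E}(n,s)$. Here, for a binary string $a$ with $a_1=0$ containing exactly $s$ zeros, written uniquely as $a=0\,1^{t_0}\,0\,1^{t_1}\cdots 0\,1^{t_{s-1}}$ with $t_i\ge 0$, the run-length encoding is $\Phi(a)=\langle t_0,t_1,\ldots,t_{s-1}\rangle$ (so $t_i$ is the number of consecutive $1$s following the $(i+1)$-th $0$, the last count including the trailing $1$s at the end of the string).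
   Context: A two-colour necklace of length $n$ is an equivalence class of binary strings of length $n$ under cyclic rotation; its canonical (lexicographically smallest) representative is the least string in the class under lexicographic order with $0<1$. An increment array (IA) of size $s$ for $n$ agents is a tuple $\underline{t}=\langle t_0,\ldots,t_{s-1}\rangle$ of non-negative integers with $\sum t_i=n-s$. Two IAs of the same size are equivalent if one is a circular shift of the other, i.e.\ $\langle u_0,\ldots,u_{s-1}\rangle=\langle t_k,\ldots,t_{s-1},t_0,\ldots,t_{k-1}\rangle$ for some $0\le k\le s-1$; the canonical representative of an equivalence class is its lexicographically smallest member, and $\mathcal{E}(n,s)$ is the set of these canonical representatives. *)

theory Defs
  imports Main "HOL-Library.List_Lexorder"
begin

text \<open>Lists are ordered lexicographically (List_Lexorder); binary strings are
nat lists over the alphabet {0,1} with 0 < 1.\<close>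

definition rotations :: "'a list \<Rightarrow> 'a list set" where
  "rotations xs = {rotate k xs | k. True}"

definition necklaces :: "nat \<Rightarrow> nat \<Rightarrow> nat list set set" where
  "necklaces n s = {rotations a | a. length a = n \<and> set a \<subseteq> {0, 1} \<and> count_list a 0 = s}"

definition canon_rep :: "nat list set \<Rightarrow> nat list" where
  "canon_rep N = Min N"

function Phi :: "nat list \<Rightarrow> nat list" where
  "Phi [] = []"
| "Phi (x # rest) = length (takeWhile (\<lambda>b. b = 1) rest) # Phi (dropWhile (\<lambda>b. b = 1) rest)"
  by pat_completeness auto
termination
  by (relation "measure length") (auto simp: le_imp_less_Suc length_dropWhile_le)

definition canonical_IAs :: "nat \<Rightarrow> nat \<Rightarrow> nat list set" where
  "canonical_IAs n s = {t. length t = s \<and> sum_list t = n - s \<and> t = Min (rotations t)}"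

end

theory Submission
  imports Defs
begin

definition enc :: "nat list \<Rightarrow> nat list" where
  "enc t = concat (map (\<lambda>k. 0 # replicate k 1) t)"

lemma enc_Nil[simp]: "enc [] = []" by (simp add: enc_def)
lemma enc_Cons[simp]: "enc (x # t) = 0 # replicate x 1 @ enc t" by (simp add: enc_def)
lemma enc_append[simp]: "enc (t @ u) = enc t @ enc u" by (simp add: enc_def)

lemma tw_enc: "takeWhile (\<lambda>b. b = 1) (enc t) = []"
  by (cases t) auto
lemma dw_enc: "dropWhile (\<lambda>b. b = 1) (enc t) = enc t"
  by (cases t) auto

lemma Phi_enc[simp]: "Phi (enc t) = t"
proof (induction t)
  case (Cons x t)
  have "takeWhile (\<lambda>b. b = 1) (replicate x 1 @ enc t) = replicate x 1"
    using tw_enc[of t] by (induction x) auto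
  moreover have "dropWhile (\<lambda>b. b = 1) (replicate x 1 @ enc t) = enc t"
    using dw_enc[of t] by (induction x) auto
  ultimately show ?case using Cons by simp
qed simp

lemma enc_Phi: "set a \<subseteq> {0,1} \<Longrightarrow> (a = [] \<or> hd a = 0) \<Longrightarrow> enc (Phi a) = a"
proof (induction a rule: Phi.induct)
  case 1
  then show ?case by simp
next
  case (2 x rest)
  let ?tw = "takeWhile (\<lambda>b. b = 1) rest"
  let ?dw = "dropWhile (\<lambda>b. b = 1) rest"
  have x0: "x = 0" using 2(3) by simp
  have "set ?dw \<subseteq> {0,1}" proof -
    have "set ?dw \<subseteq> set rest" by (meson set_dropWhileD subsetI)
    moreover have "set rest \<subseteq> {0,1}" using 2(2) by simp
    ultimately show ?thesis by blast
  qed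
  moreover have "?dw = [] \<or> hd ?dw = 0"
  proof (cases "?dw = []")
    case False
    then have "hd ?dw \<noteq> 1" using hd_dropWhile[OF False] by simp
    moreover have "hd ?dw \<in> set ?dw" using False by simp
    ultimately show ?thesis using \<open>set ?dw \<subseteq> {0,1}\<close> by auto
  qed simp
  ultimately have IH: "enc (Phi ?dw) = ?dw" using 2(1) by blast
  have "replicate (length ?tw) 1 = ?tw"
    by (metis (mono_tags, lifting) replicate_length_same set_takeWhileD)
  then show ?case using IH x0 by (simp add: takeWhile_dropWhile_id)
qed

lemma length_enc: "length (enc t) = length t + sum_list t"
  by (induction t) auto
lemma count_enc: "count_list (enc t) 0 = length t"
  by (induction t) (auto simp: count_list_0_iff)
lemma set_enc: "set (enc t) \<subseteq> {0,1}"
  by (induction t) auto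

lemma less_prefix: "p @ x < p @ y \<longleftrightarrow> (x::nat list) < y"
  by (induction p) auto

lemma rep_less: "a < b \<Longrightarrow> (X = [] \<or> hd X = 0) \<Longrightarrow> replicate a (1::nat) @ X < replicate b 1 @ Y"
proof (induction a arbitrary: b)
  case 0
  then obtain b' where "b = Suc b'" by (cases b) auto
  then show ?case using 0 by (cases X) auto
next
  case (Suc a)
  then obtain b' where "b = Suc b'" by (cases b) auto
  then show ?case using Suc by auto
qed

lemma enc_mono: "t < u \<Longrightarrow> enc t < enc u"
proof (induction t arbitrary: u)
  case Nil
  then show ?case by (cases u) auto
next
  case (Cons a t)
  then obtain b u' where u: "u = b # u'" by (cases u) auto
  show ?case
  proof (cases "a < b")
    case True
    have "enc t = [] \<or> hd (enc t) = 0" by (cases t) auto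
    then have "replicate a 1 @ enc t < replicate b 1 @ enc u'" using rep_less True by blast
    then show ?thesis using u by simp
  next
    case False
    then have "a = b" "t < u'" using Cons.prems u by auto
    then show ?thesis using Cons.IH u less_prefix[of "0 # replicate a 1"] by simp
  qed
qed

lemma enc_le_iff: "enc t \<le> enc u \<longleftrightarrow> t \<le> u"
proof
  assume "enc t \<le> enc u"
  then show "t \<le> u" using enc_mono[of u t] by (meson leD leI)
next
  assume "t \<le> u"
  then have "t = u \<or> t < u" by auto
  then show "enc t \<le> enc u" using enc_mono[of t u] by auto
qed

lemma rot_trans: "x \<in> rotations y \<Longrightarrow> y \<in> rotations z \<Longrightarrow> x \<in> rotations z"
  by (auto simp: rotations_def rotate_rotate)

lemma rot_refl: "x \<in> rotations x"
  unfolding rotations_def by (auto intro: exI[of _ 0])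

lemma rot_sym: "x \<in> rotations y \<Longrightarrow> y \<in> rotations x"
proof -
  assume "x \<in> rotations y"
  then obtain k where k: "x = rotate k y" by (auto simp: rotations_def)
  show ?thesis
  proof (cases "y = []")
    case True then show ?thesis using k rot_refl by simp
  next
    case False
    let ?L = "length y"
    have "rotate (?L - k mod ?L) x = rotate (?L - k mod ?L) (rotate (k mod ?L) y)"
      using k rotate_conv_mod by metis
    also have "\<dots> = rotate ?L y" using False by (simp add: rotate_rotate)
    also have "\<dots> = y" by simp
    finally have "y = rotate (?L - k mod ?L) x" by simp
    then show ?thesis unfolding rotations_def by blast
  qed
qed

lemma rot_eq: "x \<in> rotations y \<Longrightarrow> rotations x = rotations y"
  using rot_trans rot_sym by blast

lemma rot_finite: "finite (rotations xs)"
proof -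
  have "rotations xs \<subseteq> {ys. set ys \<subseteq> set xs \<and> length ys = length xs}"
    by (auto simp: rotations_def)
  moreover have "finite {ys. set ys \<subseteq> set xs \<and> length ys = length xs}"
    by (rule finite_lists_length_eq) simp
  ultimately show ?thesis by (rule finite_subset)
qed

lemma count_rotate: "count_list (rotate k xs) c = count_list xs c"
proof (induction k)
  case (Suc k)
  have "count_list (rotate1 ys) c = count_list ys c" for ys
    by (cases ys) auto
  then show ?case using Suc by simp
qed simp

lemma rot_props: "x \<in> rotations y \<Longrightarrow> length x = length y \<and> set x = set y \<and> count_list x c = count_list y c"
  by (auto simp: rotations_def count_rotate)

lemma enc_rot: "enc (rotate k t) \<in> rotations (enc t)"
proof (induction k)
  case 0 then show ?case by (simp add: rot_refl)
next
  case (Suc k)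
  have "enc (rotate1 u) \<in> rotations (enc u)" for u
  proof (cases u)
    case (Cons a u')
    have "enc (rotate1 u) = enc u' @ (0 # replicate a (1::nat))" using Cons by simp
    also have "\<dots> = rotate (length (0 # replicate a (1::nat))) ((0 # replicate a (1::nat)) @ enc u')"
      by (rule rotate_append[symmetric])
    finally have A: "enc (rotate1 u) = rotate (length (0 # replicate a (1::nat))) ((0 # replicate a (1::nat)) @ enc u')" .
    have B: "(0 # replicate a (1::nat)) @ enc u' = enc u" using Cons by simp
    have "enc (rotate1 u) = rotate (length (0 # replicate a (1::nat))) (enc u)"
      using A by (simp only: B)
    then show ?thesis unfolding rotations_def by blast
  qed (simp add: rot_refl)
  then show ?case using Suc rot_trans by (metis rotate_Suc)
qed

lemma rot_enc_hd0:
  "t \<noteq> [] \<Longrightarrow> hd (rotate k (enc t)) = 0 \<Longrightarrow> \<exists>j. rotate k (enc t) = enc (rotate j t)"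
proof (induction k arbitrary: t rule: less_induct)
  case (less k)
  obtain x t' where t: "t = x # t'" using less.prems by (cases t) auto
  show ?case
  proof (cases "k = 0")
    case True then show ?thesis by (auto intro: exI[of _ 0])
  next
    case False
    show ?thesis
    proof (cases "k \<le> x")
      case True
      have len: "k < length (enc t)" using True t by simp
      have "hd (rotate k (enc t)) = enc t ! k"
        using hd_rotate_conv_nth[of "enc t" k] len t by simp
      also have "\<dots> = 1"
      proof -
        have "k - 1 < x" using True False by simp
        then show ?thesis using False t by (simp add: nth_append nth_Cons')
      qed
      finally show ?thesis using less.prems by simp
    next
      case kx: False
      have e: "enc (rotate1 t) = rotate (Suc x) (enc t)"
        using t rotate_append[of "0 # replicate x 1" "enc t'"] by simp
      have "rotate k (enc t) = rotate (k - Suc x) (rotate (Suc x) (enc t))"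
      proof -
        have "k - Suc x + Suc x = k" using kx by simp
        then show ?thesis by (metis rotate_rotate)
      qed
      also have "\<dots> = rotate (k - Suc x) (enc (rotate1 t))" using e by simp
      finally have r: "rotate k (enc t) = rotate (k - Suc x) (enc (rotate1 t))" .
      have ne: "rotate1 t \<noteq> []" using t by simp
      have lt: "k - Suc x < k" using False by simp
      have h0: "hd (rotate (k - Suc x) (enc (rotate1 t))) = 0" using less.prems(2) r by simp
      obtain j where "rotate (k - Suc x) (enc (rotate1 t)) = enc (rotate j (rotate1 t))"
        using less.IH[OF lt ne h0] by blast
      then have "rotate k (enc t) = enc (rotate (Suc j) t)" using r by (simp add: rotate1_rotate_swap)
      then show ?thesis by blast
    qed
  qed
qed

lemma min_props:
  assumes "set a \<subseteq> {0,1}" "0 \<in> set (a::nat list)"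
  shows "Min (rotations a) \<in> rotations a" "hd (Min (rotations a)) = 0"
    "\<And>r. r \<in> rotations a \<Longrightarrow> Min (rotations a) \<le> r"
proof -
  have ne: "rotations a \<noteq> {}" using rot_refl by blast
  show m: "Min (rotations a) \<in> rotations a" using Min_in[OF rot_finite ne] .
  show "\<And>r. r \<in> rotations a \<Longrightarrow> Min (rotations a) \<le> r" using Min_le[OF rot_finite] by blast
  obtain i where i: "i < length a" "a ! i = 0" using assms(2) by (metis in_set_conv_nth)
  have an: "a \<noteq> []" using assms(2) by auto
  let ?r = "rotate i a"
  have hr: "hd ?r = 0" using hd_rotate_conv_nth[OF an, of i] i by simp
  have rin: "?r \<in> rotations a" by (auto simp: rotations_def)
  let ?m = "Min (rotations a)"
  have le: "?m \<le> ?r" using Min_le[OF rot_finite rin] .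
  have mp: "length ?m = length a" "set ?m = set a" using rot_props[OF m] by auto
  then have mne: "?m \<noteq> []" using an by auto
  have "hd ?m \<in> {0,1}" using mp assms(1) mne hd_in_set by blast
  moreover have "hd ?m \<noteq> 1"
  proof
    assume h: "hd ?m = 1"
    have rne: "?r \<noteq> []" using an by simp
    have "?r < ?m" using h hr mne rne
      by (metis Cons_less_Cons list.collapse zero_less_one)
    then show False using le by simp
  qed
  ultimately show "hd ?m = 0" by auto
qed

lemma neck_key:
  assumes N: "N \<in> necklaces n s" and s1: "1 \<le> s"
  shows "enc (Phi (canon_rep N)) = canon_rep N" "N = rotations (canon_rep N)"
    "Phi (canon_rep N) \<in> canonical_IAs n s"
proof -
  obtain a where a: "N = rotations a" "length a = n" "set a \<subseteq> {0,1}" "count_list a 0 = s"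
    using N unfolding necklaces_def by blast
  have a0: "0 \<in> set a" using a(4) s1 count_list_0_iff[of a 0] by auto
  let ?m = "canon_rep N"
  have mdef: "?m = Min (rotations a)" using a(1) by (simp add: canon_rep_def)
  note mp = min_props[OF a(3) a0, folded mdef]
  have mr: "length ?m = length a \<and> set ?m = set a \<and> count_list ?m 0 = count_list a 0"
    using rot_props[OF mp(1)] by blast
  have sm: "set ?m \<subseteq> {0,1}" using mr a(3) by simp
  show e: "enc (Phi ?m) = ?m" using enc_Phi[OF sm] mp(2) by blast
  show "N = rotations ?m" by (rule trans[OF a(1) sym[OF rot_eq[OF mp(1)]]])
  let ?t = "Phi ?m"
  have "length ?t = count_list (enc ?t) 0" by (rule count_enc[symmetric])
  also have "\<dots> = count_list ?m 0" by (simp only: e)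
  also have "\<dots> = s" using mr a(4) by simp
  finally have lt: "length ?t = s" .
  have "length ?t + sum_list ?t = length (enc ?t)" by (rule length_enc[symmetric])
  also have "\<dots> = length ?m" by (simp only: e)
  also have "\<dots> = n" using mr a(2) by simp
  finally have st: "sum_list ?t = n - s" using lt by linarith
  have "Min (rotations ?t) = ?t"
  proof (rule Min_eqI[OF rot_finite])
    show "?t \<in> rotations ?t" by (rule rot_refl)
  next
    fix y assume "y \<in> rotations ?t"
    then obtain k where y: "y = rotate k ?t" by (auto simp: rotations_def)
    have "enc y \<in> rotations ?m" using enc_rot[of k ?t] e y by simp
    then have "enc y \<in> rotations a" using rot_trans mp(1) by blast
    then have "?m \<le> enc y" using mp(3) by blast
    then have "enc ?t \<le> enc y" using e by simp
    then show "?t \<le> y" using enc_le_iff by blast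
  qed
  then show "?t \<in> canonical_IAs n s" unfolding canonical_IAs_def using lt st by simp
qed

theorem proposition11:
  fixes n s :: nat
  assumes "1 \<le> s" and "s \<le> n"
  shows "bij_betw (\<lambda>N. Phi (canon_rep N)) (necklaces n s) (canonical_IAs n s)"
proof (rule bij_betw_imageI)
  show "inj_on (\<lambda>N. Phi (canon_rep N)) (necklaces n s)"
  proof (rule inj_onI)
    fix N1 N2 assume N: "N1 \<in> necklaces n s" "N2 \<in> necklaces n s"
      and eq: "Phi (canon_rep N1) = Phi (canon_rep N2)"
    have "canon_rep N1 = canon_rep N2"
      using neck_key(1)[OF N(1) assms(1)] neck_key(1)[OF N(2) assms(1)] eq by metis
    then show "N1 = N2"
      using neck_key(2)[OF N(1) assms(1)] neck_key(2)[OF N(2) assms(1)] by metis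
  qed
next
  show "(\<lambda>N. Phi (canon_rep N)) ` necklaces n s = canonical_IAs n s"
  proof
    show "(\<lambda>N. Phi (canon_rep N)) ` necklaces n s \<subseteq> canonical_IAs n s"
      using neck_key(3) assms(1) by blast
  next
    show "canonical_IAs n s \<subseteq> (\<lambda>N. Phi (canon_rep N)) ` necklaces n s"
    proof
      fix t assume "t \<in> canonical_IAs n s"
      then have t: "length t = s" "sum_list t = n - s" "t = Min (rotations t)"
        unfolding canonical_IAs_def by auto
      let ?a = "enc t"
      let ?N = "rotations ?a"
      have tne: "t \<noteq> []" using t(1) assms(1) by auto
      have lena: "length ?a = n" using length_enc[of t] t assms by simp
      have cnt: "count_list ?a 0 = s" using count_enc[of t] t by simp
      have Nin: "?N \<in> necklaces n s"
        unfolding necklaces_def using lena cnt set_enc[of t] by blast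
      have a0: "0 \<in> set ?a" using tne by (cases t) auto
      note mp = min_props[OF set_enc a0]
      let ?m = "Min ?N"
      obtain k where k: "?m = rotate k ?a" using mp(1) by (auto simp: rotations_def)
      then obtain j where j: "?m = enc (rotate j t)"
        using rot_enc_hd0[OF tne, of k] mp(2) by auto
      have "Min (rotations t) \<le> rotate j t"
        by (rule Min_le[OF rot_finite]) (auto simp: rotations_def)
      then have "t \<le> rotate j t" using t(3) by metis
      then have "enc t \<le> enc (rotate j t)" using enc_le_iff by blast
      then have "?a \<le> ?m" using j by simp
      moreover have "?m \<le> ?a" using mp(3) rot_refl by blast
      ultimately have "?m = ?a" by simp
      then have "Phi (canon_rep ?N) = t" by (simp add: canon_rep_def)
      then have "t = (\<lambda>N. Phi (canon_rep N)) ?N" by simp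
      then show "t \<in> (\<lambda>N. Phi (canon_rep N)) ` necklaces n s" by (rule rev_image_eqI[OF Nin])
    qed
  qed
qed

end
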